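(* Let $G$ be a strongly connected digraph and $H$ its undirectization. If $H$ has at least two cycles with distinct vertex sets, then $G$ has at least two directed cycles with distinct vertex sets.
   Context: A digraph $G=(V,E)$, no loops or multiple edges. The undirectization $H$ is the undirected simple graph with edge $\{i,j\}$ whenever $(i,j)\in E$ or $(j,i)\in E$. A cycle of $H$ is a closed path of length $\ge3$ up to cyclic permutations and reversal; a directed cycle of $G$ is a closed directed path $(i_0,\dots,i_\ell=i_0)$ with $i_0,\dots,i_{\ell-1}$ distinct and $\ell\ge3$, up to cyclic permutations. The vertex set of a (directed) cycle is the set of its vertices. $G$ is strongly connected if any vertex can be reached from any other by a directed walk. *)

theory Defs
  imports Main
begin

definition digraph :: "'a set \<Rightarrow> ('a \<times> 'a) set \<Rightarrow> bool" where
  "digraph V E \<longleftrightarrow> finite V \<and> E \<subseteq> V \<times> V \<and> (\<forall>(i, j) \<in> E. i \<noteq> j)"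

definition und_adj :: "('a \<times> 'a) set \<Rightarrow> 'a \<Rightarrow> 'a \<Rightarrow> bool" where
  "und_adj E i j \<longleftrightarrow> (i, j) \<in> E \<or> (j, i) \<in> E"

definition dir_adj :: "('a \<times> 'a) set \<Rightarrow> 'a \<Rightarrow> 'a \<Rightarrow> bool" where
  "dir_adj E i j \<longleftrightarrow> (i, j) \<in> E"

definition cycle_list :: "('a \<Rightarrow> 'a \<Rightarrow> bool) \<Rightarrow> 'a list \<Rightarrow> bool" where
  "cycle_list R xs \<longleftrightarrow> length xs \<ge> 3 \<and> distinct xs \<and>
     (\<forall>k < length xs. R (xs ! k) (xs ! ((k + 1) mod length xs)))"

definition strongly_connected :: "'a set \<Rightarrow> ('a \<times> 'a) set \<Rightarrow> bool" where
  "strongly_connected V E \<longleftrightarrow> (\<forall>u \<in> V. \<forall>v \<in> V. (u, v) \<in> E\<^sup>*)"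

end

theory Submission
  imports Defs "HOL-Library.Transitive_Closure_Table"
begin

lemma cyc_of_path:
  assumes p: "rtrancl_path r x xs y" and rq: "\<And>a b. r a b \<Longrightarrow> Q a b" and yx: "Q y x"
    and d: "distinct (x#xs)" and l: "length xs \<ge> 2"
  shows "cycle_list Q (x#xs)"
  unfolding cycle_list_def
proof (intro conjI allI impI)
  show "3 \<le> length (x#xs)" using l by simp
  show "distinct (x#xs)" by fact
  fix k assume k: "k < length (x#xs)"
  show "Q ((x#xs)!k) ((x#xs)!((k+1) mod length (x#xs)))"
  proof (cases "k < length xs")
    case True
    then have "r ((x#xs)!k) (xs!k)" by (rule rtrancl_path_nth[OF p])
    moreover have "(k+1) mod length (x#xs) = k+1" using True by simp
    ultimately show ?thesis using rq by simp
  next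
    case False
    then have kk: "k = length xs" using k by simp
    have ne: "xs \<noteq> []" using l by auto
    then have "last xs = y" using rtrancl_path_last[OF p] by simp
    then have "(x#xs)!k = y" using kk ne by (simp add: last_conv_nth nth_Cons')
    moreover have "(k+1) mod length (x#xs) = 0" using kk by simp
    ultimately show ?thesis using yx by simp
  qed
qed

lemma factA:
  assumes uv: "(u,v) \<in> E" and RE: "R \<subseteq> E" and vu: "(v,u) \<in> R\<^sup>*" and nR: "(v,u) \<notin> R"
    and ne: "u \<noteq> v"
  shows "\<exists>cy. cycle_list (dir_adj E) cy \<and> u \<in> set cy \<and> v \<in> set cy"
proof -
  have "(\<lambda>a b. (a,b) \<in> R)\<^sup>*\<^sup>* v u" using vu by (simp add: rtranclp_rtrancl_eq)
  then obtain xs where "rtrancl_path (\<lambda>a b. (a,b) \<in> R) v xs u"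
    using rtranclp_eq_rtrancl_path by metis
  then obtain xs' where p: "rtrancl_path (\<lambda>a b. (a,b) \<in> R) v xs' u" and d: "distinct (v # xs')"
    using rtrancl_path_distinct by metis
  have l: "length xs' \<ge> 2"
  proof (rule ccontr)
    assume "\<not> ?thesis"
    then have "xs' = [] \<or> (\<exists>y. xs' = [y])"
      by (cases xs'; cases "tl xs'"; auto)
    then show False
    proof
      assume "xs' = []" then show False using p ne by (auto elim: rtrancl_path.cases)
    next
      assume "\<exists>y. xs' = [y]"
      then obtain y where y: "xs' = [y]" by blast
      from p y have "(v,y) \<in> R" "rtrancl_path (\<lambda>a b. (a,b) \<in> R) y [] u"
        by (auto elim: rtrancl_path.cases)
      then have "y = u" by (auto elim: rtrancl_path.cases)
      then show False using \<open>(v,y) \<in> R\<close> nR by simp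
    qed
  qed
  have "cycle_list (dir_adj E) (v # xs')"
    by (rule cyc_of_path[OF p _ _ d l]) (use RE uv in \<open>auto simp: dir_adj_def\<close>)
  moreover have "u \<in> set (v # xs')"
    using rtrancl_path_last[OF p] l by (cases xs') auto
  ultimately show ?thesis by auto
qed

lemma oneway_cycle:
  assumes "digraph V E" "strongly_connected V E" "(b,a) \<in> E" "(a,b) \<notin> E"
  shows "\<exists>cy. cycle_list (dir_adj E) cy \<and> a \<in> set cy \<and> b \<in> set cy"
proof -
  have "a \<in> V" "b \<in> V" "b \<noteq> a" using assms(1,3) unfolding digraph_def by auto
  then have "(a,b) \<in> E\<^sup>*" using assms(2) unfolding strongly_connected_def by auto
  from factA[OF assms(3) subset_refl this assms(4) \<open>b \<noteq> a\<close>] show ?thesis by blast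
qed

lemma cyc_reach:
  assumes Z: "cycle_list (dir_adj E) Z" and a: "a \<in> set Z" and b: "b \<in> set Z"
  shows "(a,b) \<in> (E \<inter> set Z \<times> set Z)\<^sup>*"
proof -
  let ?n = "length Z"
  have n: "?n \<ge> 3" using Z by (simp add: cycle_list_def)
  obtain i where i: "i < ?n" "Z!i = a" using a by (auto simp: in_set_conv_nth)
  obtain j where j: "j < ?n" "Z!j = b" using b by (auto simp: in_set_conv_nth)
  have all: "(Z!i, Z!((i+k) mod ?n)) \<in> (E \<inter> set Z \<times> set Z)\<^sup>*" for k
  proof (induction k)
    case 0 then show ?case using i by simp
  next
    case (Suc k)
    have lt: "(i+k) mod ?n < ?n" by (rule mod_less_divisor) (use n in linarith)
    have lt2: "Suc (i+k) mod ?n < ?n" by (rule mod_less_divisor) (use n in linarith)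
    have "(Z!((i+k) mod ?n), Z!(((i+k) mod ?n + 1) mod ?n)) \<in> E"
      using Z lt by (simp add: cycle_list_def dir_adj_def)
    moreover have "((i+k) mod ?n + 1) mod ?n = (i + Suc k) mod ?n"
      by (simp add: mod_Suc_eq)
    ultimately have "(Z!((i+k) mod ?n), Z!((i + Suc k) mod ?n)) \<in> E \<inter> set Z \<times> set Z"
      using lt lt2 by (auto intro: nth_mem)
    then show ?case using Suc by (meson rtrancl_into_rtrancl)
  qed
  have "(i + (j + ?n - i)) mod ?n = j" using i j by simp
  then show ?thesis using all[of "j + ?n - i"] i j by simp
qed

lemma cycle_rotate:
  assumes "cycle_list R xs" shows "cycle_list R (rotate m xs)"
  unfolding cycle_list_def
proof (intro conjI allI impI)
  let ?n = "length xs"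
  show "3 \<le> length (rotate m xs)" "distinct (rotate m xs)" using assms by (auto simp: cycle_list_def)
  fix k assume k: "k < length (rotate m xs)"
  have n: "?n > 0" using k by (cases xs) auto
  have nn: "xs \<noteq> []" using n by auto
  have "R (xs!((m+k) mod ?n)) (xs!(((m+k) mod ?n + 1) mod ?n))"
    using assms n by (simp add: cycle_list_def)
  moreover have "((m+k) mod ?n + 1) mod ?n = (m + (k+1) mod ?n) mod ?n"
    by (metis mod_Suc_eq mod_add_right_eq add_Suc_right Suc_eq_plus1)
  ultimately show "R (rotate m xs ! k) (rotate m xs ! ((k+1) mod length (rotate m xs)))"
    using k n nn by (simp add: nth_rotate)
qed

definition zadj :: "'a list \<Rightarrow> 'a \<Rightarrow> 'a \<Rightarrow> bool" where
  "zadj Z x y \<longleftrightarrow> (\<exists>j<length Z. (x = Z!j \<and> y = Z!((j+1) mod length Z)) \<or> (y = Z!j \<and> x = Z!((j+1) mod length Z)))"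

lemma zadj_sym: "zadj Z x y \<longleftrightarrow> zadj Z y x"
  unfolding zadj_def by blast


lemma chord:
  assumes Z: "cycle_list (dir_adj E) Z" and p: "p \<in> set Z" and q: "q \<in> set Z"
    and pq: "(p,q) \<in> E" and pnq: "p \<noteq> q" and nz: "\<not> zadj Z p q"
  shows "\<exists>cy. cycle_list (dir_adj E) cy \<and> set cy \<noteq> set Z"
proof -
  let ?n = "length Z"
  have n: "?n \<ge> 3" and dZ: "distinct Z" using Z by (auto simp: cycle_list_def)
  obtain a where a: "a < ?n" "Z!a = q" using q by (auto simp: in_set_conv_nth)
  define Z' where "Z' = rotate a Z"
  have Z': "cycle_list (dir_adj E) Z'" unfolding Z'_def by (rule cycle_rotate[OF Z])
  have lZ': "length Z' = ?n" and dZ': "distinct Z'" and sZ': "set Z' = set Z"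
    using dZ by (auto simp: Z'_def)
  have Z'nth: "\<And>i. i < ?n \<Longrightarrow> Z'!i = Z!((a+i) mod ?n)"
    unfolding Z'_def by (simp add: nth_rotate)
  have Zne: "Z \<noteq> []" using n by auto
  have Z'0: "Z'!0 = q" using Z'nth[of 0] a n Zne by simp
  obtain m where m: "m < ?n" "Z'!m = p" using p sZ' lZ' by (metis in_set_conv_nth)
  have m0: "m \<noteq> 0"
  proof
    assume "m = 0" then show False using m Z'0 pnq by simp
  qed
  have m1: "m \<noteq> 1"
  proof
    assume "m = 1"
    then have "p = Z!((a+1) mod ?n)" using m Z'nth[of 1] n by simp
    then have "zadj Z p q" unfolding zadj_def using a by blast
    then show False using nz by simp
  qed
  have mn: "m \<noteq> ?n - 1"
  proof
    assume "m = ?n - 1"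
    then have pe: "p = Z!((a + (?n - 1)) mod ?n)" using m Z'nth[of "?n - 1"] n by simp
    define j where "j = (a + (?n - 1)) mod ?n"
    have jl: "j < ?n" unfolding j_def by (rule mod_less_divisor) (use n in linarith)
    have "(j+1) mod ?n = (a + ?n) mod ?n" unfolding j_def using n
      by (metis Suc_diff_1 add_Suc_right less_le_trans mod_Suc_eq zero_less_numeral Suc_eq_plus1)
    also have "\<dots> = a" using a by simp
    finally have "zadj Z p q" unfolding zadj_def using jl pe a j_def by metis
    then show False using nz by simp
  qed
  have m2: "m \<ge> 2" and mlt: "m < ?n - 1" using m0 m1 mn m by auto
  define cy where "cy = take (m+1) Z'"
  have lcy: "length cy = m+1" using mlt lZ' by (simp add: cy_def)
  have cynth: "\<And>i. i \<le> m \<Longrightarrow> cy!i = Z'!i" by (simp add: cy_def)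
  have "cycle_list (dir_adj E) cy"
    unfolding cycle_list_def
  proof (intro conjI allI impI)
    show "3 \<le> length cy" using lcy m2 by simp
    show "distinct cy" using dZ' by (simp add: cy_def)
    fix k assume k: "k < length cy"
    show "dir_adj E (cy ! k) (cy ! ((k + 1) mod length cy))"
    proof (cases "k < m")
      case True
      have kn: "k < ?n" using True m by simp
      have "\<forall>k<?n. dir_adj E (Z'!k) (Z'!((k+1) mod ?n))" using Z' lZ' by (simp add: cycle_list_def)
      then have "dir_adj E (Z'!k) (Z'!((k+1) mod ?n))" using kn by blast
      moreover have "(k+1) mod ?n = k+1" using True mlt by simp
      moreover have "(k+1) mod length cy = k+1" using True lcy by simp
      ultimately show ?thesis using cynth True by simp
    next
      case False
      then have "k = m" using k lcy by simp
      then show ?thesis using cynth[of m] cynth[of 0] Z'0 m pq lcy by (simp add: dir_adj_def)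
    qed
  qed
  moreover have "set cy \<noteq> set Z"
  proof
    assume eq: "set cy = set Z"
    have nl: "?n - 1 < length Z'" using lZ' n by simp
    have "Z'!(?n - 1) \<in> set Z" using nth_mem[OF nl] sZ' by simp
    then have "Z'!(?n - 1) \<in> set cy" using eq by simp
    then obtain i where i: "i < m+1" "cy!i = Z'!(?n - 1)" using lcy unfolding in_set_conv_nth by auto
    then have "Z'!i = Z'!(?n - 1)" using cynth by simp
    moreover have "i < length Z'" using i mlt lZ' by simp
    ultimately have "i = ?n - 1" using dZ' nl by (simp add: nth_eq_iff_index_eq)
    then show False using i mlt by simp
  qed
  ultimately show ?thesis by blast
qed

lemma zadj_cases:
  assumes "zadj Z x y" "distinct Z" "j < length Z" "x = Z!j"
  shows "y = Z!((j+1) mod length Z) \<or> y = Z!((j + length Z - 1) mod length Z)"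
proof -
  let ?n = "length Z"
  obtain j' where j': "j' < ?n" "(x = Z!j' \<and> y = Z!((j'+1) mod ?n)) \<or> (y = Z!j' \<and> x = Z!((j'+1) mod ?n))"
    using assms(1) unfolding zadj_def by blast
  show ?thesis
  proof (cases "x = Z!j' \<and> y = Z!((j'+1) mod ?n)")
    case True
    then have "j' = j" using assms j' by (simp add: nth_eq_iff_index_eq)
    then show ?thesis using True by simp
  next
    case False
    then have y: "y = Z!j'" and x: "x = Z!((j'+1) mod ?n)" using j' by auto
    have "(j'+1) mod ?n < ?n" by (rule mod_less_divisor) (use j' in linarith)
    then have jj: "(j'+1) mod ?n = j" using assms x by (simp add: nth_eq_iff_index_eq)
    have "j' = (j + ?n - 1) mod ?n"
    proof (cases "j'+1 < ?n")
      case True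
      then have "j = j'+1" using jj by simp
      then show ?thesis using True by simp
    next
      case False
      then have "j' = ?n - 1" using j' by simp
      have "j' + 1 = ?n" using j'(1) False by simp
      then have "j = 0" using jj by simp
      then show ?thesis using \<open>j' = ?n - 1\<close> j' by simp
    qed
    then show ?thesis using y by simp
  qed
qed

lemma all_zadj:
  assumes c: "length c \<ge> 3" "distinct c" and dZ: "distinct Z"
    and sub: "set c \<subseteq> set Z" and adj: "\<forall>i<length c. zadj Z (c!i) (c!((i+1) mod length c))"
  shows "set Z \<subseteq> set c"
proof -
  let ?n = "length Z" and ?L = "length c"
  have step: "Z!((j+1) mod ?n) \<in> set c" if j: "j < ?n" "Z!j \<in> set c" for j
  proof -
    obtain i where i: "i < ?L" "c!i = Z!j" using j by (metis in_set_conv_nth)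
    define i1 where "i1 = (i+1) mod ?L"
    define i2 where "i2 = (i + ?L - 1) mod ?L"
    have Lp: "?L > 0" using c by linarith
    have i1l: "i1 < ?L" and i2l: "i2 < ?L" using Lp unfolding i1_def i2_def by auto
    have "(i2 + 1) mod ?L = i"
    proof (cases "i = 0")
      case True then show ?thesis unfolding i2_def using Lp by (simp add: Suc_pred)
    next
      case False
      have "i + ?L - 1 = (i - 1) + ?L" using False by simp
      then have "i2 = i - 1" unfolding i2_def using i by (metis mod_add_self2 mod_less less_imp_diff_less)
      then show ?thesis using False i by simp
    qed
    have a1: "zadj Z (c!i) (c!i1)" using adj i unfolding i1_def by blast
    have "zadj Z (c!i2) (c!i)" using adj i2l \<open>(i2 + 1) mod ?L = i\<close> by metis
    then have a2: "zadj Z (c!i) (c!i2)" using zadj_sym by metis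
    have "i1 \<noteq> i2"
    proof (cases "i = 0")
      case True then show ?thesis unfolding i1_def i2_def using c by simp
    next
      case False
      have "i + ?L - 1 = (i - 1) + ?L" using False by simp
      then have e2: "i2 = i - 1" unfolding i2_def using i by (metis mod_add_self2 mod_less less_imp_diff_less)
      show ?thesis
      proof (cases "i + 1 < ?L")
        case True then show ?thesis using e2 False unfolding i1_def by simp
      next
        case F2: False
        then have "Suc i = ?L" using i by simp
        then have "i1 = 0" unfolding i1_def by simp
        then show ?thesis using e2 F2 c i by simp
      qed
    qed
    then have ne: "c!i1 \<noteq> c!i2" using c i1l i2l by (simp add: nth_eq_iff_index_eq)
    have "c!i1 = Z!((j+1) mod ?n) \<or> c!i1 = Z!((j + ?n - 1) mod ?n)"
      using zadj_cases[OF a1 dZ j(1)] i by simp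
    moreover have "c!i2 = Z!((j+1) mod ?n) \<or> c!i2 = Z!((j + ?n - 1) mod ?n)"
      using zadj_cases[OF a2 dZ j(1)] i by simp
    ultimately show ?thesis using ne i1l i2l by (metis nth_mem)
  qed
  have cpos: "0 < length c" using c by linarith
  have c0c: "c!0 \<in> set c" using nth_mem[OF cpos] .
  have c0: "c!0 \<in> set Z" using sub c0c by auto
  then obtain j0 where j0: "j0 < ?n" "Z!j0 = c!0" by (metis in_set_conv_nth)
  have npos: "?n > 0" using j0 by linarith
  have all: "Z!((j0 + k) mod ?n) \<in> set c" for k
  proof (induction k)
    case 0 then show ?case using j0 c0c by simp
  next
    case (Suc k)
    have "Z!(((j0+k) mod ?n + 1) mod ?n) \<in> set c" using step[OF _ Suc] npos by simp
    then show ?case by (simp add: mod_Suc_eq)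
  qed
  show ?thesis
  proof
    fix x assume "x \<in> set Z"
    then obtain j where j: "j < ?n" "Z!j = x" by (metis in_set_conv_nth)
    have "(j0 + (j + ?n - j0)) mod ?n = j" using j j0 by simp
    then show "x \<in> set c" using all[of "j + ?n - j0"] j by simp
  qed
qed


theorem lemma2p5:
  fixes V :: "'a set" and E :: "('a \<times> 'a) set"
  assumes "digraph V E"
    and "strongly_connected V E"
    and "\<exists>c1 c2. cycle_list (und_adj E) c1 \<and> cycle_list (und_adj E) c2 \<and> set c1 \<noteq> set c2"
  shows "\<exists>c1 c2. cycle_list (dir_adj E) c1 \<and> cycle_list (dir_adj E) c2 \<and> set c1 \<noteq> set c2"
proof (rule ccontr)
  assume nc: "\<not> ?thesis"
  then have same: "\<And>d1 d2. cycle_list (dir_adj E) d1 \<Longrightarrow> cycle_list (dir_adj E) d2 \<Longrightarrow> set d1 = set d2"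
    by blast
  obtain c1 c2 where c1: "cycle_list (und_adj E) c1" and c2: "cycle_list (und_adj E) c2"
    and ne: "set c1 \<noteq> set c2" using assms(3) by blast
  have one: "\<And>a b. (b,a) \<in> E \<Longrightarrow> (a,b) \<notin> E \<Longrightarrow> \<exists>cy. cycle_list (dir_adj E) cy \<and> a \<in> set cy \<and> b \<in> set cy"
    using oneway_cycle[OF assms(1,2)] by blast
  obtain Z where Z: "cycle_list (dir_adj E) Z"
  proof (cases "\<forall>i<length c1. (c1!i, c1!((i+1) mod length c1)) \<in> E")
    case True
    then have "cycle_list (dir_adj E) c1" using c1 by (simp add: cycle_list_def dir_adj_def)
    then show ?thesis using that by blast
  next
    case False
    then obtain i where i: "i < length c1" and ni: "(c1!i, c1!((i+1) mod length c1)) \<notin> E" by blast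
    then have "(c1!((i+1) mod length c1), c1!i) \<in> E" using c1 unfolding cycle_list_def und_adj_def by blast
    then obtain cy where "cycle_list (dir_adj E) cy" using one ni by blast
    then show ?thesis using that by blast
  qed
  define S where "S = set Z"
  have allS: "\<And>cy. cycle_list (dir_adj E) cy \<Longrightarrow> set cy = S" using same Z S_def by blast
  have oneS: "\<And>a b. (b,a) \<in> E \<Longrightarrow> (a,b) \<notin> E \<Longrightarrow> a \<in> S \<and> b \<in> S" using one allS by blast
  obtain c where c: "cycle_list (und_adj E) c" and cS: "set c \<noteq> S" using c1 c2 ne by metis
  have nZ: "length Z \<ge> 3" and dZ: "distinct Z" using Z by (auto simp: cycle_list_def)
  show False
  proof (cases "set c \<subseteq> S")
    case False
    then obtain w where w: "w \<in> set c" "w \<notin> S" by blast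
    obtain k where k: "k < length c" "c!k = w" using w by (metis in_set_conv_nth)
    define c' where "c' = rotate k c"
    have c': "cycle_list (und_adj E) c'" unfolding c'_def by (rule cycle_rotate[OF c])
    let ?n = "length c'"
    have n: "?n \<ge> 3" and dc': "distinct c'" using c' by (auto simp: cycle_list_def)
    have cne: "c' \<noteq> []" using n by (cases c') auto
    have l1: "1 < ?n" "0 < ?n" "?n - 1 < ?n" "?n - 1 \<noteq> 1" "?n - 1 \<noteq> 0" using n by linarith+
    have cadj: "\<And>i. i < ?n \<Longrightarrow> und_adj E (c'!i) (c'!((i+1) mod ?n))"
      using c' unfolding cycle_list_def by blast
    have "0 < length c" using k by linarith
    then have c'0: "c'!0 = w" unfolding c'_def using k nth_rotate[of 0 c k] by simp
    define v where "v = c'!1"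
    have "und_adj E w v" using cadj[of 0] n c'0 l1 cne unfolding v_def by simp
    then have wv: "(w,v) \<in> E" "(v,w) \<in> E" using oneS w(2) unfolding und_adj_def by blast+
    have wnv: "w \<noteq> v" unfolding v_def c'0[symmetric] using dc' n l1
      by (simp add: nth_eq_iff_index_eq)
    define R where "R = E - {(w,v),(v,w)}"
    have RE: "R \<subseteq> E" unfolding R_def by blast
    have neq_w: "\<And>i. 0 < i \<Longrightarrow> i < ?n \<Longrightarrow> c'!i \<noteq> w"
      unfolding c'0[symmetric] using dc' l1 by (simp add: nth_eq_iff_index_eq)
    have SR: "E \<inter> set Z \<times> set Z \<subseteq> R" unfolding R_def using w(2) S_def by blast
    have path: "i < ?n \<Longrightarrow> 1 \<le> i \<Longrightarrow> (v, c'!i) \<in> R\<^sup>*" for i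
    proof (induction i)
      case 0 then show ?case by simp
    next
      case (Suc i)
      show ?case
      proof (cases "i = 0")
        case True then show ?thesis by (simp add: v_def)
      next
        case False
        have IH: "(v, c'!i) \<in> R\<^sup>*" using Suc False by simp
        have mi: "(i+1) mod ?n = Suc i" using Suc by simp
        have ua: "und_adj E (c'!i) (c'!Suc i)" using cadj[of i] Suc mi by simp
        have a1: "c'!i \<noteq> w" using neq_w[of i] False Suc by simp
        have a2: "c'!Suc i \<noteq> w" using neq_w[of "Suc i"] Suc by simp
        have "(c'!i, c'!Suc i) \<in> R\<^sup>*"
        proof (cases "(c'!i, c'!Suc i) \<in> E")
          case True
          then have "(c'!i, c'!Suc i) \<in> R" unfolding R_def using a1 a2 by blast
          then show ?thesis by blast
        next
          case False
          then have "(c'!Suc i, c'!i) \<in> E" using ua unfolding und_adj_def by blast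
          then have "c'!i \<in> S \<and> c'!Suc i \<in> S" using oneS False by blast
          then have "(c'!i, c'!Suc i) \<in> (E \<inter> set Z \<times> set Z)\<^sup>*"
            using cyc_reach[OF Z] S_def by blast
          then show ?thesis using rtrancl_mono[OF SR] by blast
        qed
        then show ?thesis using IH by (meson rtrancl_trans)
      qed
    qed
    define a where "a = c'!(?n - 1)"
    have "(?n - 1) + 1 = ?n" using n by linarith
    then have "((?n - 1) + 1) mod ?n = 0" by simp
    then have "und_adj E a w" using cadj[of "?n - 1"] n c'0 l1 unfolding a_def by simp
    moreover have "a \<noteq> w" unfolding a_def using neq_w[of "?n - 1"] n l1 by simp
    moreover have "a \<noteq> v" unfolding a_def v_def using dc' n l1 by (simp add: nth_eq_iff_index_eq)
    ultimately have "(a,w) \<in> R" using oneS w(2) unfolding und_adj_def R_def by blast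
    moreover have "(v,a) \<in> R\<^sup>*" unfolding a_def using path[of "?n - 1"] n l1 by simp
    ultimately have "(v,w) \<in> R\<^sup>*" by (meson rtrancl_into_rtrancl)
    moreover have "(v,w) \<notin> R" unfolding R_def by blast
    ultimately obtain cy where "cycle_list (dir_adj E) cy" "w \<in> set cy"
      using factA[OF wv(1) RE _ _ wnv] by blast
    then show False using allS w(2) by blast
  next
    case True
    then have sub: "set c \<subseteq> set Z" using S_def by simp
    let ?L = "length c"
    have L: "?L \<ge> 3" and dc: "distinct c" using c by (auto simp: cycle_list_def)
    show False
    proof (cases "\<forall>i<?L. zadj Z (c!i) (c!((i+1) mod ?L))")
      case True
      have "set Z \<subseteq> set c" by (rule all_zadj[OF L dc dZ sub True])
      then show False using sub cS S_def by blast
    next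
      case False
      then obtain i where i: "i < ?L" and nz: "\<not> zadj Z (c!i) (c!((i+1) mod ?L))" by blast
      define p where "p = c!i"
      define q where "q = c!((i+1) mod ?L)"
      have il: "(i+1) mod ?L < ?L" by (rule mod_less_divisor) (use L in linarith)
      have ua: "und_adj E p q" using c i unfolding cycle_list_def p_def q_def by blast
      have "i \<noteq> (i+1) mod ?L"
      proof (cases "i + 1 < ?L")
        case True then show ?thesis by simp
      next
        case False
        then have "Suc i = ?L" using i by simp
        then show ?thesis using L by simp
      qed
      then have pq: "p \<noteq> q" unfolding p_def q_def using dc i il by (simp add: nth_eq_iff_index_eq)
      have pS: "p \<in> set Z" "q \<in> set Z" unfolding p_def q_def using sub i il by (auto intro: nth_mem)
      have "\<exists>cy. cycle_list (dir_adj E) cy \<and> set cy \<noteq> set Z"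
      proof (cases "(p,q) \<in> E")
        case True
        show ?thesis by (rule chord[OF Z pS(1) pS(2) True pq]) (use nz p_def q_def in simp)
      next
        case False
        then have qp: "(q,p) \<in> E" using ua unfolding und_adj_def by blast
        have "q \<noteq> p" using pq by simp
        moreover have "\<not> zadj Z q p" using nz zadj_sym unfolding p_def q_def by metis
        ultimately show ?thesis using chord[OF Z pS(2) pS(1) qp] by blast
      qed
      then show False using allS S_def by blast
    qed
  qed
qed

end
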